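(* Let $D\geq 2$ and $k\geq 1$. There exist positive constants $c$, $C'$, $C''$ depending only on $D$ and $k$ such that the following holds. Let $0<\varepsilon<c$ and set $\eta=\exp(-C'/\varepsilon)$ and $\delta=\exp(-C''/\varepsilon)$. Let $E\subset\mathbb R^D$ be finite with $\mathrm{card}(E)\leq k$, and let $\phi:E\to\mathbb R^D$ satisfy \[(1+\delta)^{-1}|x-y|\leq|\phi(x)-\phi(y)|\leq(1+\delta)|x-y|\quad\text{for all }x,y\in E.\] If $\phi$ has a negative $\eta$-block, then $\phi$ cannot be extended to a proper $\delta$-distorted diffeomorphism of $\mathbb R^D$.
   Context: Work in $\mathbb R^D$ with Euclidean norm. An affine map $x\mapsto Lx+b$ is proper if $\det L>0$, improper if $\det L<0$. For $\delta>0$, a $\delta$-distorted diffeomorphism is a diffeomorphism $\Phi$ of $\mathbb R^D$ onto $\mathbb R^D$ with $(1+\delta)^{-1}I\leq(\nabla\Phi(x))^T\nabla\Phi(x)\leq(1+\delta)I$ for all $x$; it is proper if $\det\nabla\Phi>0$ everywhere. $V_D(z_0,\dots,z_D)$ is the $D$-dimensional volume of the simplex with vertices $z_0,\dots,z_D$. For finite $E$, $\phi:E\to\mathbb R^D$ and $0<\eta<1$, a positive (resp. negative) $\eta$-block for $\phi$ is a $(D+1)$-tuple $(x_0,\dots,x_D)$ of points of $E$ with $V_D(x_0,\dots,x_D)\geq\eta^D(\mathrm{diam}\{x_0,\dots,x_D\})^D$ such that the unique affine map $T$ with $T(x_i)=\phi(x_i)$, $i=0,\dots,D$, is proper (resp.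 improper). *)

theory Defs
  imports "HOL-Analysis.Analysis"
begin

text \<open>We work in real^'n, so D = CARD('n). A (D+1)-tuple (x_0,...,x_D) of points is
  represented by a base point x0 together with a family xs indexed by the D elements of 'n.\<close>

definition simplex_volume :: "real^'n \<Rightarrow> ('n \<Rightarrow> real^'n) \<Rightarrow> real" where
  "simplex_volume x0 xs = measure lebesgue (convex hull (insert x0 (range xs)))"

definition tuple_diam :: "real^'n \<Rightarrow> ('n \<Rightarrow> real^'n) \<Rightarrow> real" where
  "tuple_diam x0 xs = diameter (insert x0 (range xs))"

definition interpolates :: "real^'n^'n \<Rightarrow> real^'n \<Rightarrow> (real^'n \<Rightarrow> real^'n)
    \<Rightarrow> real^'n \<Rightarrow> ('n \<Rightarrow> real^'n) \<Rightarrow> bool" where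
  "interpolates L b \<phi> x0 xs \<longleftrightarrow> L *v x0 + b = \<phi> x0 \<and> (\<forall>i. L *v xs i + b = \<phi> (xs i))"

definition negative_block :: "real \<Rightarrow> (real^'n) set \<Rightarrow> (real^'n \<Rightarrow> real^'n)
    \<Rightarrow> real^'n \<Rightarrow> ('n \<Rightarrow> real^'n) \<Rightarrow> bool" where
  "negative_block \<eta> E \<phi> x0 xs \<longleftrightarrow>
     x0 \<in> E \<and> (\<forall>i. xs i \<in> E) \<and>
     simplex_volume x0 xs \<ge> \<eta> ^ CARD('n) * (tuple_diam x0 xs) ^ CARD('n) \<and>
     (\<exists>!Lb. interpolates (fst Lb) (snd Lb) \<phi> x0 xs) \<and>
     (\<forall>L b. interpolates L b \<phi> x0 xs \<longrightarrow> det L < 0)"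

definition has_negative_block :: "real \<Rightarrow> (real^'n) set \<Rightarrow> (real^'n \<Rightarrow> real^'n) \<Rightarrow> bool" where
  "has_negative_block \<eta> E \<phi> \<longleftrightarrow> (\<exists>x0 xs. negative_block \<eta> E \<phi> x0 xs)"

definition diffeo :: "(real^'n \<Rightarrow> real^'n) \<Rightarrow> bool" where
  "diffeo \<Phi> \<longleftrightarrow> bij \<Phi> \<and> (\<forall>x. \<Phi> differentiable (at x)) \<and>
     continuous_on UNIV (\<lambda>x. matrix (frechet_derivative \<Phi> (at x))) \<and>
     (\<forall>y. inv \<Phi> differentiable (at y)) \<and>
     continuous_on UNIV (\<lambda>y. matrix (frechet_derivative (inv \<Phi>) (at y)))"

text \<open>(1+delta)^{-1} I \<le> (grad Phi)^T grad Phi \<le> (1+delta) I, as quadratic forms: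
  v^T M^T M v = |M v|^2.\<close>
definition proper_distorted_diffeo :: "real \<Rightarrow> (real^'n \<Rightarrow> real^'n) \<Rightarrow> bool" where
  "proper_distorted_diffeo \<delta> \<Phi> \<longleftrightarrow> diffeo \<Phi> \<and>
     (\<forall>x. let M = matrix (frechet_derivative \<Phi> (at x)) in
        det M > 0 \<and>
        (\<forall>v. inverse (1 + \<delta>) * (v \<bullet> v) \<le> (M *v v) \<bullet> (M *v v) \<and>
             (M *v v) \<bullet> (M *v v) \<le> (1 + \<delta>) * (v \<bullet> v)))"

end

theory Submission
  imports Defs "HOL-Combinatorics.Permutations"
begin


typedef 'a wo = "UNIV :: 'a set" by auto

instance wo :: (finite) finite
proof
  have "UNIV = range (Abs_wo :: 'a \<Rightarrow> 'a wo)"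
    by (metis Abs_wo_cases surj_def UNIV_I)
  then show "finite (UNIV :: 'a wo set)" by (metis finite finite_imageI)
qed

instantiation wo :: (finite) wellorder
begin
definition less_eq_wo :: "'a wo \<Rightarrow> 'a wo \<Rightarrow> bool" where
  "less_eq_wo x y \<longleftrightarrow> to_nat (Rep_wo x) \<le> to_nat (Rep_wo y)"
definition less_wo :: "'a wo \<Rightarrow> 'a wo \<Rightarrow> bool" where
  "less_wo x y \<longleftrightarrow> to_nat (Rep_wo x) < to_nat (Rep_wo y)"
instance
proof
  fix x y z :: "'a wo"
  show "(x < y) = (x \<le> y \<and> \<not> y \<le> x)" by (auto simp: less_eq_wo_def less_wo_def)
  show "x \<le> x" by (simp add: less_eq_wo_def)
  show "x \<le> y \<Longrightarrow> y \<le> z \<Longrightarrow> x \<le> z" by (simp add: less_eq_wo_def)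
  show "x \<le> y \<Longrightarrow> y \<le> x \<Longrightarrow> x = y"
    by (simp add: less_eq_wo_def Rep_wo_inject)
  show "x \<le> y \<or> y \<le> x" by (auto simp: less_eq_wo_def)
next
  fix P :: "'a wo \<Rightarrow> bool" and a
  assume H: "\<And>x. (\<And>y. y < x \<Longrightarrow> P y) \<Longrightarrow> P x"
  show "P a"
    by (induct a rule: measure_induct_rule[where f="\<lambda>x. to_nat (Rep_wo x)"]) (auto intro: H simp: less_wo_def)
qed
end



definition rl :: "real^'n::finite \<Rightarrow> real^('n wo)" where
  "rl x = (\<chi> j. x $ Rep_wo j)"
definition rl' :: "real^('n::finite wo) \<Rightarrow> real^'n" where
  "rl' y = (\<chi> i. y $ Abs_wo i)"

lemma rl_rl' [simp]: "rl (rl' y) = y"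
  by (simp add: rl_def rl'_def vec_eq_iff Rep_wo_inverse)
lemma rl'_rl [simp]: "rl' (rl x) = x"
  by (simp add: rl_def rl'_def vec_eq_iff Abs_wo_inverse)

lemma cont_rl: "continuous_on UNIV rl"
  unfolding rl_def by (intro continuous_on_vec_lambda continuous_intros)
lemma cont_rl': "continuous_on UNIV rl'"
  unfolding rl'_def by (intro continuous_on_vec_lambda continuous_intros)

lemma prod_Basis_cart: "(\<Prod>b\<in>(Basis :: (real^'m::finite) set). v \<bullet> b) = (\<Prod>j\<in>UNIV. v $ j)"
proof -
  have "(Basis :: (real^'m) set) = (\<lambda>j. axis j 1) ` UNIV"
    by (auto simp: Basis_vec_def)
  moreover have "inj (\<lambda>j::'m. axis j (1::real))"
    by (auto simp: inj_def axis_eq_axis)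
  ultimately have "(\<Prod>b\<in>(Basis :: (real^'m) set). v \<bullet> b) = (\<Prod>j\<in>UNIV. v \<bullet> axis j 1)"
    by (metis (no_types, lifting) comp_apply prod.cong prod.reindex)
  then show ?thesis by (simp add: cart_eq_inner_axis)
qed

lemma distr_rl: "distr lborel borel (rl :: real^'n::finite \<Rightarrow> _) = lborel"
proof (rule lborel_eqI[symmetric])
  have meas: "rl \<in> borel_measurable (lborel :: (real^'n) measure)"
    using borel_measurable_continuous_onI[OF cont_rl] by simp
  fix l u :: "real^('n wo)"
  assume le: "\<And>b. b \<in> Basis \<Longrightarrow> l \<bullet> b \<le> u \<bullet> b"
  have le': "l $ j \<le> u $ j" for j
    using le[of "axis j 1"] by (auto simp: Basis_vec_def cart_eq_inner_axis)
  have pre: "rl -` box l u = box (rl' l) (rl' u)"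
    by (auto simp: mem_box_cart rl_def rl'_def Abs_wo_inverse)
       (metis Rep_wo_inverse Abs_wo_inverse UNIV_I)+
  have "emeasure (distr lborel borel rl) (box l u) = emeasure lborel (box (rl' l) (rl' u))"
    by (simp add: emeasure_distr[OF meas] pre)
  also have "\<dots> = (\<Prod>b\<in>Basis. (rl' u - rl' l) \<bullet> b)"
  proof (rule emeasure_lborel_box)
    fix b :: "real^'n" assume "b \<in> Basis"
    then obtain j where b: "b = axis j 1" by (auto simp: Basis_vec_def)
    have "rl' l \<bullet> b = l $ Abs_wo j" "rl' u \<bullet> b = u $ Abs_wo j"
      by (simp_all add: b cart_eq_inner_axis[symmetric] rl'_def)
    then show "rl' l \<bullet> b \<le> rl' u \<bullet> b" using le' by simp
  qed
  also have "\<dots> = (\<Prod>i\<in>UNIV. (u - l) $ Abs_wo i)"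
    by (simp add: prod_Basis_cart rl'_def)
  also have "\<dots> = (\<Prod>j\<in>UNIV. (u - l) $ j)"
    by (intro arg_cong[where f=ennreal] prod.reindex_bij_witness[where i=Rep_wo and j=Abs_wo])
       (auto simp: Abs_wo_inverse Rep_wo_inverse)
  also have "\<dots> = (\<Prod>b\<in>Basis. (u - l) \<bullet> b)"
    by (simp add: prod_Basis_cart)
  finally show "emeasure (distr lborel borel rl) (box l u) = (\<Prod>b\<in>Basis. (u - l) \<bullet> b)" .
qed simp

lemma emeasure_rl:
  assumes "S \<in> sets borel"
  shows "emeasure lborel (rl ` S) = emeasure lborel (S :: (real^'n::finite) set)"
proof -
  have meas: "rl \<in> borel_measurable (lborel :: (real^'n) measure)"
    using borel_measurable_continuous_onI[OF cont_rl] by simp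
  have meas': "rl' \<in> borel_measurable (borel :: (real^'n wo) measure)"
    using borel_measurable_continuous_onI[OF cont_rl'] by simp
  have img: "rl ` S = rl' -` S"
    by (auto simp: image_iff) (metis rl_rl')
  have "rl ` S \<in> sets borel"
    unfolding img using measurable_sets[OF meas' assms] by simp
  then have "emeasure lborel (rl ` S) = emeasure (distr lborel borel rl) (rl ` S)"
    by (simp add: distr_rl)
  also have "\<dots> = emeasure lborel (rl -` (rl ` S))"
    using \<open>rl ` S \<in> sets borel\<close> by (simp add: emeasure_distr[OF meas])
  also have "rl -` (rl ` S) = S"
    by (auto simp: image_iff) (metis rl'_rl)
  finally show ?thesis .
qed

lemma emeasure_rl':
  assumes "S \<in> sets borel"
  shows "emeasure lborel (rl' ` S) = emeasure lborel (S :: (real^'n::finite wo) set)"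
proof -
  have meas: "rl \<in> borel_measurable (borel :: (real^'n) measure)"
    using borel_measurable_continuous_onI[OF cont_rl] by simp
  have img: "rl' ` S = rl -` S"
    by (auto simp: image_iff) (metis rl'_rl)
  have "rl' ` S \<in> sets borel"
    unfolding img using measurable_sets[OF meas assms] by simp
  then have "emeasure lborel (rl ` (rl' ` S)) = emeasure lborel (rl' ` S)"
    by (rule emeasure_rl)
  moreover have "rl ` (rl' ` S) = S" by (simp add: image_image)
  ultimately show ?thesis by simp
qed



lemma permutes_conj_wo:
  fixes q :: "'n::finite wo \<Rightarrow> 'n wo"
  assumes "q permutes UNIV"
  shows "(Rep_wo \<circ> q \<circ> Abs_wo) permutes UNIV"
  using assms unfolding permutes_univ
  by (metis Abs_wo_inverse Rep_wo_inverse UNIV_I comp_apply)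

lemma permutes_conj_wo':
  fixes p :: "'n::finite \<Rightarrow> 'n"
  assumes "p permutes UNIV"
  shows "(Abs_wo \<circ> p \<circ> Rep_wo) permutes UNIV"
  using assms unfolding permutes_univ
  by (metis Abs_wo_inverse Rep_wo_inverse UNIV_I comp_apply)

lemma sign_conj_wo:
  fixes q :: "'n::finite wo \<Rightarrow> 'n wo"
  assumes "q permutes UNIV"
  shows "sign (Rep_wo \<circ> q \<circ> Abs_wo) = sign q"
proof -
  interpret permutes_bij_finite q UNIV UNIV Rep_wo Abs_wo "\<lambda>x. if x \<in> UNIV then Rep_wo (q (Abs_wo x)) else x"
  proof unfold_locales
    show "bij_betw Rep_wo UNIV UNIV"
      by (auto simp: bij_betw_def inj_def Rep_wo_inject image_iff) (metis Abs_wo_inverse UNIV_I)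
  qed (auto simp: assms Rep_wo_inverse)
  have "(\<lambda>x. if x \<in> UNIV then Rep_wo (q (Abs_wo x)) else x) = Rep_wo \<circ> q \<circ> Abs_wo" by (simp add: fun_eq_iff)
  with sign_p' show ?thesis by simp
qed

lemma det_wo: "det (\<chi> j j'. (X::real^'n::finite^'n) $ Rep_wo j $ Rep_wo j') = det X"
proof -
  let ?Y = "(\<chi> j j'. X $ Rep_wo j $ Rep_wo j') :: real^('n wo)^('n wo)"
  have "det ?Y = (\<Sum>q\<in>{q. q permutes UNIV}. of_int (sign q) * (\<Prod>j\<in>UNIV. ?Y $ j $ q j))"
    by (simp add: det_def)
  also have "\<dots> = (\<Sum>p\<in>{p. p permutes UNIV}. of_int (sign p) * (\<Prod>i\<in>UNIV. X $ i $ p i))"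
  proof (rule sum.reindex_bij_witness[where i="\<lambda>p. Abs_wo \<circ> p \<circ> Rep_wo" and j="\<lambda>q. Rep_wo \<circ> q \<circ> Abs_wo"])
    fix q :: "'n wo \<Rightarrow> 'n wo" assume q: "q \<in> {q. q permutes UNIV}"
    show "Abs_wo \<circ> (Rep_wo \<circ> q \<circ> Abs_wo) \<circ> Rep_wo = q"
      by (simp add: fun_eq_iff Rep_wo_inverse)
    show "Rep_wo \<circ> q \<circ> Abs_wo \<in> {p. p permutes UNIV}"
      using q permutes_conj_wo by blast
    have sg: "sign (Rep_wo \<circ> q \<circ> Abs_wo) = sign q" using q sign_conj_wo by blast
    have eqprod: "(\<Prod>j\<in>UNIV. ?Y $ j $ q j) = (\<Prod>i\<in>UNIV. X $ i $ (Rep_wo \<circ> q \<circ> Abs_wo) i)"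
      by (rule prod.reindex_bij_witness[where i=Abs_wo and j=Rep_wo])
         (auto simp: Abs_wo_inverse Rep_wo_inverse)
    then show "of_int (sign (Rep_wo \<circ> q \<circ> Abs_wo)) * (\<Prod>i\<in>UNIV. X $ i $ (Rep_wo \<circ> q \<circ> Abs_wo) i)
             = of_int (sign q) * (\<Prod>j\<in>UNIV. ?Y $ j $ q j)"
      by (simp only: sg eqprod)
  next
    fix p :: "'n \<Rightarrow> 'n" assume p: "p \<in> {p. p permutes UNIV}"
    show "Rep_wo \<circ> (Abs_wo \<circ> p \<circ> Rep_wo) \<circ> Abs_wo = p"
      by (simp add: fun_eq_iff Abs_wo_inverse)
    show "Abs_wo \<circ> p \<circ> Rep_wo \<in> {q. q permutes UNIV}"
      using p permutes_conj_wo' by blast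
  qed
  also have "\<dots> = det X" by (simp add: det_def)
  finally show ?thesis .
qed

lemma measure_linear_image_fin:
  fixes f :: "real^'n::finite \<Rightarrow> real^'n"
  assumes "linear f" "compact S"
  shows "measure lebesgue (f ` S) = \<bar>det (matrix f)\<bar> * measure lebesgue S"
proof -
  define g where "g = rl \<circ> f \<circ> rl'"
  have lg: "linear g"
  proof -
    have "linear rl" by (auto simp: linear_iff rl_def vec_eq_iff)
    moreover have "linear rl'" by (auto simp: linear_iff rl'_def vec_eq_iff)
    ultimately show ?thesis unfolding g_def using assms(1) by (intro linear_compose) 
  qed
  have mg: "matrix g = (\<chi> j j'. matrix f $ Rep_wo j $ Rep_wo j')"
  proof -
    have ax: "rl' (axis j' 1) = axis (Rep_wo j') 1" for j' :: "'n wo"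
      by (auto simp: rl'_def vec_eq_iff axis_def) (metis Abs_wo_inverse Rep_wo_inverse UNIV_I)+
    show ?thesis unfolding matrix_def g_def by (simp add: ax rl_def)
  qed
  have cS: "compact (rl ` S)" using assms(2) cont_rl
    by (meson compact_continuous_image continuous_on_subset subset_UNIV)
  have cfS: "compact (f ` S)" using assms
    by (simp add: compact_continuous_image linear_continuous_on linear_linear)
  have "f ` S = rl' ` (g ` (rl ` S))" by (simp add: g_def image_image)
  have borS: "S \<in> sets borel" using assms(2) by (simp add: compact_imp_closed)
  have borfS: "f ` S \<in> sets borel" using cfS by (simp add: compact_imp_closed)
  have "measure lebesgue (f ` S) = measure lborel (f ` S)" using borfS by simp
  also have "\<dots> = measure lborel (rl ` (f ` S))"
    using emeasure_rl[OF borfS] by (simp add: measure_def)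
  also have "rl ` (f ` S) = g ` (rl ` S)" by (simp add: g_def image_image)
  also have "measure lborel (g ` (rl ` S)) = measure lebesgue (g ` (rl ` S))"
  proof -
    have "compact (g ` (rl ` S))" using lg cS
      by (simp add: compact_continuous_image linear_continuous_on linear_linear)
    then show ?thesis by (simp add: compact_imp_closed)
  qed
  also have "\<dots> = \<bar>det (matrix g)\<bar> * measure lebesgue (rl ` S)"
    using lg cS by (simp add: measure_linear_image lmeasurable_compact)
  also have "measure lebesgue (rl ` S) = measure lborel (rl ` S)"
    using cS by (simp add: compact_imp_closed)
  also have "\<dots> = measure lborel S"
    using emeasure_rl[OF borS] by (simp add: measure_def)
  also have "\<dots> = measure lebesgue S" using borS by simp
  finally show ?thesis by (simp add: mg det_wo)
qed



lemma One_nth_cart [simp]: "(\<Sum>x\<in>(Basis::(real^'n::finite) set). x $ i) = 1"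
proof -
  have e: "(Basis :: (real^'n) set) = (\<lambda>j. axis j 1) ` UNIV"
    by (auto simp: Basis_vec_def)
  have inj: "inj (\<lambda>j::'n. axis j (1::real))"
    by (auto simp: inj_def axis_eq_axis)
  have "(\<Sum>x\<in>(Basis::(real^'n) set). x $ i) = (\<Sum>j\<in>UNIV. axis j (1::real) $ i)"
    unfolding e sum.reindex[OF inj] o_def ..
  also have "\<dots> = (\<Sum>j\<in>UNIV. if j = i then 1 else 0)" by (intro sum.cong) (auto simp: axis_def)
  also have "\<dots> = 1" by simp
  finally show ?thesis .
qed

lemma vol_le_det:
  fixes x0 :: "real^'n::finite" and xs :: "'n \<Rightarrow> real^'n"
  shows "simplex_volume x0 xs \<le> \<bar>det (\<chi> i. xs i - x0)\<bar>"
proof -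
  define A where "A = (\<chi> i. xs i - x0)"
  define f where "f = (\<lambda>s. transpose A *v s)"
  have lf: "linear f" unfolding f_def by (simp add: matrix_vector_mul_linear)
  have mf: "matrix f = transpose A" unfolding f_def by simp
  define T where "T = (+) x0 ` (f ` cbox 0 One)"
  have fax: "f (axis i 1) = xs i - x0" for i
    by (simp add: f_def A_def vec_eq_iff matrix_vector_mult_def transpose_def axis_def
        if_distrib[of "\<lambda>x. _ * x"] cong: if_cong)
  have sub: "insert x0 (range xs) \<subseteq> T"
  proof -
    have "x0 = x0 + f 0" using lf by (simp add: linear_0)
    moreover have "(0::real^'n) \<in> cbox 0 One" by (auto simp: mem_box)
    ultimately have "x0 \<in> T" unfolding T_def by blast
    moreover have "xs i \<in> T" for i
    proof -
      have "axis i (1::real) \<in> cbox 0 One" by (simp add: mem_box_cart axis_def)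
      moreover have "xs i = x0 + f (axis i 1)" by (simp add: fax)
      ultimately show ?thesis unfolding T_def by blast
    qed
    ultimately show ?thesis by blast
  qed
  have cT: "convex T" unfolding T_def
    by (intro convex_translation convex_linear_image lf convex_box)
  have hsub: "convex hull (insert x0 (range xs)) \<subseteq> T"
    by (rule hull_minimal[where S=convex, OF sub cT])
  have compT: "compact T" unfolding T_def
    by (intro compact_translation compact_continuous_image linear_continuous_on)
       (auto simp: lf linear_linear)
  have compH: "compact (convex hull (insert x0 (range xs)))"
    by (intro compact_convex_hull finite_imp_compact) auto
  have "simplex_volume x0 xs \<le> measure lebesgue T"
    unfolding simplex_volume_def
    by (rule measure_mono_fmeasurable[OF hsub]) (auto intro: lmeasurable_compact compT compH fmeasurableD)
  also have "\<dots> = measure lebesgue (f ` cbox 0 One)"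
    unfolding T_def by (rule measure_translation)
  also have "\<dots> = \<bar>det (matrix f)\<bar> * measure lebesgue (cbox (0::real^'n) One)"
    by (rule measure_linear_image_fin[OF lf]) simp
  also have "measure lebesgue (cbox (0::real^'n) One) = 1"
    by simp
  finally show ?thesis by (simp add: mf A_def)
qed



lemma hadamard_lite:
  fixes X :: "real^'n::finite^'n"
  assumes r: "\<And>i. norm (X $ i) \<le> r i"
  shows "\<bar>det X\<bar> \<le> fact CARD('n) * prod r UNIV"
proof -
  have "\<bar>det X\<bar> \<le> (\<Sum>p\<in>{p. p permutes (UNIV::'n set)}. \<bar>of_int (sign p) * (\<Prod>i\<in>UNIV. X $ i $ p i)\<bar>)"
    unfolding det_def by (rule sum_abs)
  also have "\<dots> \<le> (\<Sum>p\<in>{p. p permutes (UNIV::'n set)}. prod r UNIV)"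
  proof (rule sum_mono)
    fix p :: "'n \<Rightarrow> 'n"
    have "\<bar>of_int (sign p) * (\<Prod>i\<in>UNIV. X $ i $ p i)\<bar> = (\<Prod>i\<in>UNIV. \<bar>X $ i $ p i\<bar>)"
      by (simp add: abs_mult abs_prod flip: of_int_abs)
    also have "\<dots> \<le> prod r UNIV"
      proof (rule prod_mono)
      fix i
      show "0 \<le> \<bar>X $ i $ p i\<bar> \<and> \<bar>X $ i $ p i\<bar> \<le> r i"
        using component_le_norm_cart[of "X $ i" "p i"] r[of i] by simp
    qed
    finally show "\<bar>of_int (sign p) * (\<Prod>i\<in>UNIV. X $ i $ p i)\<bar> \<le> prod r UNIV" .
  qed
  also have "\<dots> = fact CARD('n) * prod r UNIV"
    by (simp add: card_permutations)
  finally show ?thesis .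
qed

lemma det_row_replace:
  fixes a :: "'n::finite \<Rightarrow> real^'n"
  shows "det ((\<chi> i. if i = k then (\<Sum>j\<in>UNIV. c j *\<^sub>R a j) else a i)::real^'n^'n) = c k * det ((\<chi> i. a i)::real^'n^'n)"
proof -
  have "det ((\<chi> i. if i = k then (\<Sum>j\<in>UNIV. c j *\<^sub>R a j) else a i)::real^'n^'n)
      = (\<Sum>j\<in>UNIV. det ((\<chi> i. if i = k then c j *\<^sub>R a j else a i)::real^'n^'n))"
    by (rule det_linear_row_sum) simp
  also have "\<dots> = (\<Sum>j\<in>UNIV. if j = k then c k * det ((\<chi> i. a i)::real^'n^'n) else 0)"
  proof (rule sum.cong[OF refl])
    fix j
    have "det ((\<chi> i. if i = k then c j *\<^sub>R a j else a i)::real^'n^'n)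
        = c j * det ((\<chi> i. if i = k then a j else a i)::real^'n^'n)"
      unfolding scalar_mult_eq_scaleR[symmetric] by (rule det_row_mul)
    moreover have "det ((\<chi> i. if i = k then a j else a i)::real^'n^'n) = 0" if "j \<noteq> k"
      by (rule det_identical_rows[of k j]) (use that in \<open>auto simp: row_def vec_eq_iff\<close>)
    moreover have "((\<chi> i. if i = k then a k else a i)::real^'n^'n) = (\<chi> i. a i)"
      by (simp add: vec_eq_iff)
    ultimately show "det ((\<chi> i. if i = k then c j *\<^sub>R a j else a i)::real^'n^'n)
        = (if j = k then c k * det ((\<chi> i. a i)::real^'n^'n) else 0)"
      by auto
  qed
  also have "\<dots> = c k * det ((\<chi> i. a i)::real^'n^'n)" by simp
  finally show ?thesis .
qed



lemma sq_close:
  fixes x y \<delta> :: real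
  assumes "0 \<le> x" "0 \<le> y" "0 \<le> \<delta>" "y \<le> (1+\<delta>) * x" "x \<le> (1+\<delta>) * y"
  shows "\<bar>x - y\<bar> \<le> \<delta> * x"
proof (cases "y \<le> x")
  case True
  have "\<delta> * y \<le> \<delta> * x" using True assms by (simp add: mult_left_mono)
  then show ?thesis using assms True by (simp add: algebra_simps)
next
  case False
  then show ?thesis using assms by (simp add: algebra_simps)
qed

lemma polar: "(a::real^'n::finite) \<bullet> b = (norm a ^ 2 + norm b ^ 2 - norm (a - b) ^ 2) / 2"
  by (simp add: power2_norm_eq_inner inner_diff_left inner_diff_right inner_commute)

lemma quant:
  fixes a b :: "'n::finite \<Rightarrow> real^'n" and lam :: "real^'n" and \<delta> d :: real
  assumes dl: "\<delta> \<ge> 0"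
    and na: "\<And>i. norm (a i) \<le> d" and nab: "\<And>i j. norm (a i - a j) \<le> d"
    and b1: "\<And>i. norm (b i) ^ 2 \<le> (1+\<delta>) * norm (a i) ^ 2"
    and b2: "\<And>i. norm (a i) ^ 2 \<le> (1+\<delta>) * norm (b i) ^ 2"
    and b3: "\<And>i j. norm (b i - b j) ^ 2 \<le> (1+\<delta>) * norm (a i - a j) ^ 2"
    and b4: "\<And>i j. norm (a i - a j) ^ 2 \<le> (1+\<delta>) * norm (b i - b j) ^ 2"
    and lam: "lam \<noteq> 0" and dep: "(\<Sum>i\<in>UNIV. lam $ i *\<^sub>R b i) = 0"
  shows "(det ((\<chi> i. a i)::real^'n^'n)) ^ 2
           \<le> 2 * real (CARD('n)) ^ 2 * (fact CARD('n)) ^ 2 * \<delta> * d ^ (2 * CARD('n))"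
proof -
  let ?D = "CARD('n)"
  have d0: "0 \<le> d" using na[of undefined] norm_ge_zero order_trans by blast
  have nsq: "norm (a i) ^ 2 \<le> d ^ 2" for i using na[of i] by (simp add: power_mono)
  have nsq2: "norm (a i - a j) ^ 2 \<le> d ^ 2" for i j using nab[of i j] by (simp add: power_mono)
  define K where "K = 2 * \<delta> * d ^ 2"
  have K0: "0 \<le> K" unfolding K_def using dl by simp
  have e1: "\<bar>norm (a i) ^ 2 - norm (b i) ^ 2\<bar> \<le> \<delta> * d ^ 2" for i
  proof -
    have "\<bar>norm (a i) ^ 2 - norm (b i) ^ 2\<bar> \<le> \<delta> * norm (a i) ^ 2"
      by (rule sq_close) (use dl b1 b2 in auto)
    also have "\<dots> \<le> \<delta> * d ^ 2" using nsq[of i] dl by (simp add: mult_left_mono)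
    finally show ?thesis .
  qed
  have e2: "\<bar>norm (a i - a j) ^ 2 - norm (b i - b j) ^ 2\<bar> \<le> \<delta> * d ^ 2" for i j
  proof -
    have "\<bar>norm (a i - a j) ^ 2 - norm (b i - b j) ^ 2\<bar> \<le> \<delta> * norm (a i - a j) ^ 2"
      by (rule sq_close) (use dl b3 b4 in auto)
    also have "\<dots> \<le> \<delta> * d ^ 2" using nsq2[of i j] dl by (simp add: mult_left_mono)
    finally show ?thesis .
  qed
  have einner: "\<bar>a i \<bullet> a j - b i \<bullet> b j\<bar> \<le> K" for i j
  proof -
    define E where "E = (norm (a i) ^ 2 - norm (b i) ^ 2) + (norm (a j) ^ 2 - norm (b j) ^ 2)
          - (norm (a i - a j) ^ 2 - norm (b i - b j) ^ 2)"
    have eq: "a i \<bullet> a j - b i \<bullet> b j = E / 2"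
      unfolding E_def by (simp add: polar[of "a i"] polar[of "b i"] field_simps)
    have "\<bar>E\<bar> \<le> 3 * (\<delta> * d ^ 2)"
      unfolding E_def using e1[of i] e1[of j] e2[of i j] by linarith
    moreover have "\<bar>a i \<bullet> a j - b i \<bullet> b j\<bar> = \<bar>E\<bar> / 2" by (simp add: eq)
    ultimately have "\<bar>a i \<bullet> a j - b i \<bullet> b j\<bar> \<le> 3 * (\<delta> * d ^ 2) / 2" by linarith
    also have "\<dots> \<le> K" unfolding K_def using dl by simp
    finally show ?thesis .
  qed
  obtain k where k: "\<And>i. \<bar>lam $ i\<bar> \<le> \<bar>lam $ k\<bar>"
  proof -
    let ?S = "(\<lambda>i. \<bar>lam $ i\<bar>) ` (UNIV::'n set)"
    have "Max ?S \<in> ?S" by (intro Max_in) auto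
    then obtain k where "Max ?S = \<bar>lam $ k\<bar>" by (metis (no_types, lifting) imageE)
    moreover have "\<bar>lam $ i\<bar> \<le> Max ?S" for i by (intro Max_ge) auto
    ultimately show ?thesis using that by metis
  qed
  define m where "m = \<bar>lam $ k\<bar>"
  have m0: "m > 0"
  proof -
    obtain i where "lam $ i \<noteq> 0" using lam by (auto simp: vec_eq_iff)
    then show ?thesis using k[of i] unfolding m_def by simp
  qed
  define u where "u = (\<Sum>j\<in>UNIV. lam $ j *\<^sub>R a j)"
  have uu: "u \<bullet> u = (\<Sum>i\<in>UNIV. \<Sum>j\<in>UNIV. lam $ i * lam $ j * (a j \<bullet> a i))"
    unfolding u_def by (simp add: inner_sum_left inner_sum_right sum_distrib_left mult.assoc)
  have bb: "(\<Sum>i\<in>UNIV. \<Sum>j\<in>UNIV. lam $ i * lam $ j * (b j \<bullet> b i)) = 0"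
  proof -
    have "(\<Sum>i\<in>UNIV. lam $ i *\<^sub>R b i) \<bullet> (\<Sum>j\<in>UNIV. lam $ j *\<^sub>R b j)
       = (\<Sum>i\<in>UNIV. \<Sum>j\<in>UNIV. lam $ i * lam $ j * (b j \<bullet> b i))"
      by (simp add: inner_sum_left inner_sum_right sum_distrib_left mult.assoc)
    then show ?thesis using dep by simp
  qed
  have "u \<bullet> u = (\<Sum>i\<in>UNIV. \<Sum>j\<in>UNIV. lam $ i * lam $ j * (a j \<bullet> a i - b j \<bullet> b i))"
    using uu bb by (simp add: right_diff_distrib sum_subtractf)
  also have "\<dots> \<le> (\<Sum>i\<in>(UNIV::'n set). \<Sum>j\<in>(UNIV::'n set). m * m * K)"
  proof (intro sum_mono)
    fix i j
    have "lam $ i * lam $ j * (a j \<bullet> a i - b j \<bullet> b i) \<le> \<bar>lam $ i\<bar> * \<bar>lam $ j\<bar> * \<bar>a j \<bullet> a i - b j \<bullet> b i\<bar>"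
      by (metis abs_ge_self abs_mult)
    also have "\<dots> \<le> m * m * K"
    proof -
      have "\<bar>lam $ i\<bar> * \<bar>lam $ j\<bar> \<le> m * m"
        using k[of i] k[of j] unfolding m_def by (intro mult_mono) auto
      then show ?thesis using einner[of j i] K0
        by - (rule mult_mono, auto)
    qed
    finally show "lam $ i * lam $ j * (a j \<bullet> a i - b j \<bullet> b i) \<le> m * m * K" .
  qed
  also have "\<dots> = real ?D ^ 2 * m ^ 2 * K" by (simp add: power2_eq_square)
  finally have uK: "norm u ^ 2 \<le> real ?D ^ 2 * m ^ 2 * K" by (simp add: power2_norm_eq_inner)
  define A' where "A' = ((\<chi> i. if i = k then u else a i)::real^'n^'n)"
  have detA': "det A' = lam $ k * det ((\<chi> i. a i)::real^'n^'n)"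
    unfolding A'_def u_def by (rule det_row_replace)
  have "\<bar>det A'\<bar> \<le> fact ?D * prod (\<lambda>i. if i = k then norm u else d) UNIV"
    by (rule hadamard_lite) (auto simp: A'_def na)
  also have "prod (\<lambda>i. if i = k then norm u else d) UNIV = norm u * d ^ (?D - 1)"
  proof -
    have "prod (\<lambda>i. if i = k then norm u else d) UNIV
        = (\<lambda>i. if i = k then norm u else d) k * prod (\<lambda>i. if i = k then norm u else d) (UNIV - {k})"
      by (rule prod.remove) auto
    also have "prod (\<lambda>i. if i = k then norm u else d) (UNIV - {k}) = prod (\<lambda>i. d) (UNIV - {k})"
      by (rule prod.cong) auto
    also have "\<dots> = d ^ (?D - 1)" by (simp add: card_Diff_singleton)
    finally show ?thesis by simp
  qed
  finally have hb: "m * \<bar>det ((\<chi> i. a i)::real^'n^'n)\<bar> \<le> fact ?D * (norm u * d ^ (?D - 1))"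
    using detA' unfolding m_def by (simp add: abs_mult)
  define dt where "dt = \<bar>det ((\<chi> i. a i)::real^'n^'n)\<bar>"
  have "(m * dt) ^ 2 \<le> (fact ?D * (norm u * d ^ (?D - 1))) ^ 2"
    using hb m0 unfolding dt_def by (intro power_mono) auto
  also have "\<dots> = (fact ?D) ^ 2 * norm u ^ 2 * (d ^ (?D - 1)) ^ 2" by (simp add: power_mult_distrib)
  also have "\<dots> \<le> (fact ?D) ^ 2 * (real ?D ^ 2 * m ^ 2 * K) * (d ^ (?D - 1)) ^ 2"
    using uK by (intro mult_right_mono mult_left_mono) auto
  finally have main: "m ^ 2 * dt ^ 2 \<le> m ^ 2 * ((fact ?D) ^ 2 * real ?D ^ 2 * K * (d ^ (?D - 1)) ^ 2)"
    by (simp add: power_mult_distrib algebra_simps)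
  then have "dt ^ 2 \<le> (fact ?D) ^ 2 * real ?D ^ 2 * K * (d ^ (?D - 1)) ^ 2"
    using m0 by simp
  also have "\<dots> = (fact ?D) ^ 2 * real ?D ^ 2 * (K * (d ^ (?D - 1)) ^ 2)" by simp
  also have "K * (d ^ (?D - 1)) ^ 2 = 2 * \<delta> * d ^ (2 * ?D)"
  proof -
    have "?D \<ge> 1" by (simp add: Suc_leI)
    then have "2 * ?D = 2 + 2 * (?D - 1)" by arith
    then have "d ^ (2 * ?D) = d ^ 2 * d ^ (2 * (?D - 1))" by (metis power_add)
    also have "d ^ (2 * (?D - 1)) = (d ^ (?D - 1)) ^ 2" by (rule power_even_eq)
    finally show ?thesis unfolding K_def by simp
  qed
  finally show ?thesis unfolding dt_def by (simp add: algebra_simps)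
qed



lemma pdd_facts:
  assumes "proper_distorted_diffeo \<delta> \<Phi>"
  shows "bij \<Phi>" "\<And>x. \<Phi> differentiable (at x)" "\<And>y. inv \<Phi> differentiable (at y)"
    "\<And>x. det (matrix (frechet_derivative \<Phi> (at x))) > 0"
    "\<And>x v. inverse (1 + \<delta>) * (v \<bullet> v) \<le> (matrix (frechet_derivative \<Phi> (at x)) *v v) \<bullet> (matrix (frechet_derivative \<Phi> (at x)) *v v)"
    "\<And>x v. (matrix (frechet_derivative \<Phi> (at x)) *v v) \<bullet> (matrix (frechet_derivative \<Phi> (at x)) *v v) \<le> (1 + \<delta>) * (v \<bullet> v)"
  using assms unfolding proper_distorted_diffeo_def diffeo_def Let_def by auto

lemma norm_le_sqrt_of_inner:
  fixes w v :: "'a::real_inner"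
  assumes "w \<bullet> w \<le> c * (v \<bullet> v)"
  shows "norm w \<le> sqrt c * norm v"
proof -
  have "norm w = sqrt (w \<bullet> w)" by (simp add: norm_eq_sqrt_inner)
  also have "\<dots> \<le> sqrt (c * (v \<bullet> v))" using assms by (rule real_sqrt_le_mono)
  also have "\<dots> = sqrt c * norm v" by (simp add: real_sqrt_mult norm_eq_sqrt_inner)
  finally show ?thesis .
qed

lemma lip_upper:
  fixes \<Phi> :: "real^'n::finite \<Rightarrow> real^'n"
  assumes pd: "proper_distorted_diffeo \<delta> \<Phi>" and d0: "0 \<le> \<delta>"
  shows "norm (\<Phi> x - \<Phi> y) ^ 2 \<le> (1 + \<delta>) * norm (x - y) ^ 2"
proof -
  note F = pdd_facts[OF pd]
  have der: "(\<Phi> has_derivative frechet_derivative \<Phi> (at z)) (at z within UNIV)" for z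
    using F(2)[of z] frechet_derivative_works by auto
  have on: "onorm (frechet_derivative \<Phi> (at z)) \<le> sqrt (1 + \<delta>)" for z
  proof (rule onorm_le)
    fix v
    have lin: "linear (frechet_derivative \<Phi> (at z))"
      using der[of z] has_derivative_linear by auto
    have "frechet_derivative \<Phi> (at z) v = matrix (frechet_derivative \<Phi> (at z)) *v v"
      using lin by (simp add: matrix_works)
    then show "norm (frechet_derivative \<Phi> (at z) v) \<le> sqrt (1 + \<delta>) * norm v"
      using F(6)[of z v] by (simp add: norm_le_sqrt_of_inner)
  qed
  have "norm (\<Phi> x - \<Phi> y) \<le> sqrt (1 + \<delta>) * norm (x - y)"
    by (rule differentiable_bound[where S=UNIV, OF convex_UNIV der on]) auto
  then have "norm (\<Phi> x - \<Phi> y) ^ 2 \<le> (sqrt (1 + \<delta>) * norm (x - y)) ^ 2"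
    by (intro power_mono) auto
  also have "\<dots> = (1 + \<delta>) * norm (x - y) ^ 2" using d0 by (simp add: power_mult_distrib)
  finally show ?thesis .
qed

lemma lip_lower:
  fixes \<Phi> :: "real^'n::finite \<Rightarrow> real^'n"
  assumes pd: "proper_distorted_diffeo \<delta> \<Phi>" and d0: "0 \<le> \<delta>"
  shows "norm (x - y) ^ 2 \<le> (1 + \<delta>) * norm (\<Phi> x - \<Phi> y) ^ 2"
proof -
  note F = pdd_facts[OF pd]
  define \<Psi> where "\<Psi> = inv \<Phi>"
  have PsiPhi: "\<Psi> (\<Phi> z) = z" for z unfolding \<Psi>_def using F(1) by (simp add: bij_is_inj)
  have PhiPsi: "\<Phi> (\<Psi> z) = z" for z unfolding \<Psi>_def using F(1) by (simp add: bij_is_surj surj_f_inv_f)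
  have derPhi: "(\<Phi> has_derivative frechet_derivative \<Phi> (at z)) (at z)" for z
    using F(2)[of z] frechet_derivative_works by auto
  have der: "(\<Psi> has_derivative frechet_derivative \<Psi> (at z)) (at z within UNIV)" for z
    using F(3)[of z] frechet_derivative_works unfolding \<Psi>_def by auto
  have on: "onorm (frechet_derivative \<Psi> (at z)) \<le> sqrt (1 + \<delta>)" for z
  proof (rule onorm_le)
    fix v
    let ?g = "frechet_derivative \<Psi> (at z)"
    let ?f = "frechet_derivative \<Phi> (at (\<Psi> z))"
    have "((\<Phi> \<circ> \<Psi>) has_derivative (?f \<circ> ?g)) (at z)"
      by (rule diff_chain_at) (use der[of z] derPhi[of "\<Psi> z"] in auto)
    moreover have "\<Phi> \<circ> \<Psi> = id" by (simp add: fun_eq_iff PhiPsi)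
    ultimately have "(id has_derivative (?f \<circ> ?g)) (at z)" by simp
    then have comp: "?f \<circ> ?g = id"
      using has_derivative_unique[OF has_derivative_id] by metis
    have lin: "linear ?f" using derPhi[of "\<Psi> z"] has_derivative_linear by auto
    have "matrix ?f *v (?g v) = v"
      using lin comp by (simp add: matrix_works fun_eq_iff)
    then have "inverse (1 + \<delta>) * (?g v \<bullet> ?g v) \<le> v \<bullet> v"
      using F(5)[of "?g v" "\<Psi> z"] by simp
    then have "?g v \<bullet> ?g v \<le> (1 + \<delta>) * (v \<bullet> v)"
      using d0 by (simp add: field_simps)
    then show "norm (?g v) \<le> sqrt (1 + \<delta>) * norm v"
      by (simp add: norm_le_sqrt_of_inner)
  qed
  have "norm (\<Psi> (\<Phi> x) - \<Psi> (\<Phi> y)) \<le> sqrt (1 + \<delta>) * norm (\<Phi> x - \<Phi> y)"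
    by (rule differentiable_bound[where S=UNIV, OF convex_UNIV der on]) auto
  then have "norm (x - y) \<le> sqrt (1 + \<delta>) * norm (\<Phi> x - \<Phi> y)" by (simp add: PsiPhi)
  then have "norm (x - y) ^ 2 \<le> (sqrt (1 + \<delta>) * norm (\<Phi> x - \<Phi> y)) ^ 2"
    by (intro power_mono) auto
  also have "\<dots> = (1 + \<delta>) * norm (\<Phi> x - \<Phi> y) ^ 2" using d0 by (simp add: power_mult_distrib)
  finally show ?thesis .
qed



lemma diffquot:
  fixes h :: "real \<Rightarrow> 'a::real_normed_vector"
  assumes "(h has_derivative (\<lambda>t. t *\<^sub>R v)) (at 0)"
  shows "((\<lambda>t. (h t - h 0) /\<^sub>R t) \<longlongrightarrow> v) (at_right 0)"
proof -
  have "(h has_derivative (\<lambda>t. t *\<^sub>R v)) (at 0 within {0<..})"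
    using assms has_derivative_subset by blast
  then have "((\<lambda>y. ((h y - h 0) - (y - 0) *\<^sub>R v) /\<^sub>R norm (y - 0)) \<longlongrightarrow> 0) (at_right 0)"
    by (simp add: has_derivative_at_within)
  moreover have "\<forall>\<^sub>F y in at_right 0. ((h y - h 0) - (y - 0) *\<^sub>R v) /\<^sub>R norm (y - 0) = (h y - h 0) /\<^sub>R y - v"
    by (rule eventually_at_rightI[of 0 1]) (auto simp: scaleR_diff_right)
  ultimately have "((\<lambda>y. (h y - h 0) /\<^sub>R y - v) \<longlongrightarrow> 0) (at_right 0)"
    using tendsto_cong by fastforce
  then show ?thesis by (simp add: Lim_null[symmetric])
qed

lemma rowmul: "(((\<chi> i. a i)::real^'n::finite^'n) ** transpose X) $ i = X *v a i"
  by (simp add: vec_eq_iff matrix_matrix_mult_def matrix_vector_mult_def transpose_def mult.commute)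

lemma transpose_mult_sum: "transpose (B::real^'n::finite^'n) *v l = (\<Sum>i\<in>UNIV. l $ i *\<^sub>R B $ i)"
  by (simp add: vec_eq_iff matrix_vector_mult_def transpose_def mult.commute sum_component)

lemma det_zero_dep:
  fixes B :: "real^'n::finite^'n"
  assumes "det B = 0"
  shows "\<exists>l. l \<noteq> 0 \<and> (\<Sum>i\<in>UNIV. l $ i *\<^sub>R B $ i) = 0"
proof -
  have "det (matrix ((*v) (transpose B))) = 0" using assms by simp
  then have "\<not> inj ((*v) (transpose B))"
    using det_nz_iff_inj[of "(*v) (transpose B)"] by (simp add: matrix_vector_mul_linear)
  then obtain x y where "x \<noteq> y" "transpose B *v x = transpose B *v y" by (auto simp: inj_def)
  then have "x - y \<noteq> 0" "transpose B *v (x - y) = 0"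
    by (auto simp: matrix_vector_mult_diff_distrib)
  then show ?thesis by (metis transpose_mult_sum)
qed

lemma det_cont:
  fixes X :: "real \<Rightarrow> real^'n::finite^'n"
  assumes "\<And>i j. continuous_on S (\<lambda>t. X t $ i $ j)"
  shows "continuous_on S (\<lambda>t. det (X t))"
  unfolding det_def by (intro continuous_intros assms)

lemma det_tendsto:
  fixes X :: "real \<Rightarrow> real^'n::finite^'n"
  assumes "\<And>i j. ((\<lambda>t. X t $ i $ j) \<longlongrightarrow> Y $ i $ j) F"
  shows "((\<lambda>t. det (X t)) \<longlongrightarrow> det Y) F"
  unfolding det_def by (intro tendsto_intros assms)



lemma scaled_bounds:
  fixes \<Phi> :: "real^'n::finite \<Rightarrow> real^'n"
  assumes pd: "proper_distorted_diffeo \<delta> \<Phi>" and d0: "0 \<le> \<delta>" and t: "0 < t"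
  shows "norm ((\<Phi> p - \<Phi> q) /\<^sub>R t) ^ 2 \<le> (1 + \<delta>) * norm ((p - q) /\<^sub>R t) ^ 2"
    and "norm ((p - q) /\<^sub>R t) ^ 2 \<le> (1 + \<delta>) * norm ((\<Phi> p - \<Phi> q) /\<^sub>R t) ^ 2"
proof -
  have e: "norm (v /\<^sub>R t) ^ 2 = norm v ^ 2 / t ^ 2" for v :: "real^'n"
    using t by (simp add: power_mult_distrib field_simps)
  show "norm ((\<Phi> p - \<Phi> q) /\<^sub>R t) ^ 2 \<le> (1 + \<delta>) * norm ((p - q) /\<^sub>R t) ^ 2"
    unfolding e using lip_upper[OF pd d0, of p q] t
    by (simp add: divide_right_mono)
  show "norm ((p - q) /\<^sub>R t) ^ 2 \<le> (1 + \<delta>) * norm ((\<Phi> p - \<Phi> q) /\<^sub>R t) ^ 2"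
    unfolding e using lip_lower[OF pd d0, of p q] t
    by (simp add: divide_right_mono)
qed

lemma exists_t1:
  fixes \<Phi> :: "real^'n::finite \<Rightarrow> real^'n" and a :: "'n \<Rightarrow> real^'n"
  assumes pd: "proper_distorted_diffeo \<delta> \<Phi>"
    and La: "\<And>i. L *v a i = \<Phi> (pp + a i) - \<Phi> pp"
    and detL: "det L < 0" and detA: "det ((\<chi> i. a i)::real^'n^'n) \<noteq> 0"
  shows "\<exists>t1>0. det ((\<chi> i. (\<Phi> (pp + t1 *\<^sub>R a i) - \<Phi> pp) /\<^sub>R t1)::real^'n^'n) = 0"
proof -
  note F = pdd_facts[OF pd]
  define A where "A = ((\<chi> i. a i)::real^'n^'n)"
  define Bt where "Bt t = ((\<chi> i. (\<Phi> (pp + t *\<^sub>R a i) - \<Phi> pp) /\<^sub>R t)::real^'n^'n)" for t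
  define g where "g t = det (Bt t) * det A" for t
  define M0 where "M0 = matrix (frechet_derivative \<Phi> (at pp))"
  have "Bt 1 = A ** transpose L"
  proof (rule vec_eq_iff[THEN iffD2], intro allI)
    fix i
    show "Bt 1 $ i = (A ** transpose L) $ i"
      unfolding A_def rowmul by (simp add: Bt_def La)
  qed
  then have "g 1 = (det A * det A) * det L" by (simp add: g_def det_mul)
  moreover have "det A * det A > 0" using detA unfolding A_def by (metis not_real_square_gt_zero)
  ultimately have g1: "g 1 < 0" using detL by (simp add: mult_pos_neg)
  have derPhi: "(\<Phi> has_derivative frechet_derivative \<Phi> (at z)) (at z)" for z
    using F(2)[of z] frechet_derivative_works by auto
  have lin: "linear (frechet_derivative \<Phi> (at pp))"
    using derPhi[of pp] has_derivative_linear by auto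
  have fe: "frechet_derivative \<Phi> (at pp) = (\<lambda>v. M0 *v v)"
    using lin by (simp add: fun_eq_iff matrix_works M0_def)
  have lim_row: "((\<lambda>t. Bt t $ i) \<longlongrightarrow> M0 *v a i) (at_right 0)" for i
  proof -
    have d1: "((\<lambda>t. pp + t *\<^sub>R a i) has_derivative (\<lambda>t. t *\<^sub>R a i)) (at 0)"
      by (auto intro!: derivative_eq_intros)
    have d2: "(\<Phi> has_derivative (\<lambda>v. M0 *v v)) (at ((\<lambda>t. pp + t *\<^sub>R a i) 0))"
      using derPhi[of pp] by (simp add: fe)
    have "((\<Phi> \<circ> (\<lambda>t. pp + t *\<^sub>R a i)) has_derivative ((\<lambda>v. M0 *v v) \<circ> (\<lambda>t. t *\<^sub>R a i))) (at 0)"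
      by (rule diff_chain_at[OF d1 d2])
    then have "((\<lambda>t. \<Phi> (pp + t *\<^sub>R a i)) has_derivative (\<lambda>t. t *\<^sub>R (M0 *v a i))) (at 0)"
      by (simp add: o_def matrix_vector_mult_scaleR)
    from diffquot[OF this] show ?thesis by (simp add: Bt_def)
  qed
  have "((\<lambda>t. det (Bt t)) \<longlongrightarrow> det (A ** transpose M0)) (at_right 0)"
  proof (rule det_tendsto)
    fix i j
    show "((\<lambda>t. Bt t $ i $ j) \<longlongrightarrow> (A ** transpose M0) $ i $ j) (at_right 0)"
      unfolding A_def rowmul by (intro tendsto_vec_nth lim_row)
  qed
  then have "(g \<longlongrightarrow> det (A ** transpose M0) * det A) (at_right 0)"
    unfolding g_def by (intro tendsto_intros)
  moreover have "det (A ** transpose M0) * det A > 0"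
  proof -
    have eq: "det (A ** transpose M0) = det A * det M0" by (simp add: det_mul)
    have "det (A ** transpose M0) * det A = (det A * det A) * det M0" by (simp add: eq)
    moreover have "det A * det A > 0" using detA unfolding A_def by (metis not_real_square_gt_zero)
    moreover have "det M0 > 0" using F(4)[of pp] by (simp add: M0_def)
    ultimately show ?thesis by (metis mult_pos_pos)
  qed
  ultimately have "\<forall>\<^sub>F t in at_right 0. 0 < g t" by (rule order_tendstoD(1))
  then obtain bb where bb: "bb > 0" "\<And>y. 0 < y \<Longrightarrow> y < bb \<Longrightarrow> 0 < g y"
    unfolding eventually_at_right_field by auto
  define t0 where "t0 = min (bb / 2) (1 / 2)"
  have t0: "0 < t0" "t0 \<le> 1" "0 < g t0" using bb unfolding t0_def by auto
  have contPhi: "continuous_on UNIV \<Phi>"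
    using F(2) by (simp add: differentiable_imp_continuous_on differentiable_on_def)
  have cont: "continuous_on {t0..1} g"
    unfolding g_def
  proof (intro continuous_on_mult_right det_cont)
    fix i j
    have c1: "continuous_on {t0..1} (\<lambda>t. \<Phi> (pp + t *\<^sub>R a i))"
      by (rule continuous_on_compose2[OF contPhi]) (auto intro!: continuous_intros)
    have "continuous_on {t0..1} (\<lambda>t. (\<Phi> (pp + t *\<^sub>R a i) - \<Phi> pp) /\<^sub>R t)"
      using t0(1) by (intro continuous_intros c1) auto
    then have "continuous_on {t0..1} (\<lambda>t. ((\<Phi> (pp + t *\<^sub>R a i) - \<Phi> pp) /\<^sub>R t) $ j)"
      by (rule continuous_on_component)
    then show "continuous_on {t0..1} (\<lambda>t. Bt t $ i $ j)"
      unfolding Bt_def by simp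
  qed
  obtain t1 where "t0 \<le> t1" "t1 \<le> 1" "g t1 = 0"
    using IVT2'[of g 1 0 t0] g1 t0 cont by auto
  then show ?thesis
    using t0(1) detA by (intro exI[of _ t1]) (auto simp: g_def Bt_def A_def)
qed

lemma main_ineq:
  fixes \<Phi> \<phi> :: "real^'n::finite \<Rightarrow> real^'n" and E :: "(real^'n) set"
  assumes pd: "proper_distorted_diffeo \<delta> \<Phi>" and d0: "0 \<le> \<delta>"
    and nb: "negative_block \<eta> E \<phi> x0 xs" and ext: "\<forall>x\<in>E. \<Phi> x = \<phi> x" and e0: "0 \<le> \<eta>"
  shows "\<eta> ^ (2 * CARD('n)) \<le> 2 * real (CARD('n)) ^ 2 * (fact CARD('n)) ^ 2 * \<delta>"
proof -
  let ?D = "CARD('n)"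
  note F = pdd_facts[OF pd]
  define a where "a i = xs i - x0" for i
  define A where "A = ((\<chi> i. a i) :: real^'n^'n)"
  define d where "d = tuple_diam x0 xs"
  from nb have x0E: "x0 \<in> E" and xsE: "\<And>i. xs i \<in> E"
    and vol: "simplex_volume x0 xs \<ge> \<eta> ^ ?D * d ^ ?D"
    and uniq: "\<exists>!Lb. interpolates (fst Lb) (snd Lb) \<phi> x0 xs"
    and neg: "\<And>L b. interpolates L b \<phi> x0 xs \<Longrightarrow> det L < 0"
    unfolding negative_block_def d_def by auto
  obtain L b where Lb: "interpolates L b \<phi> x0 xs" using uniq by auto
  have detL: "det L < 0" using neg[OF Lb] .
  have detA: "det A \<noteq> 0"
  proof
    assume "det A = 0"
    then obtain w where w: "w \<noteq> 0" "(\<Sum>i\<in>UNIV. w $ i *\<^sub>R (transpose A) $ i) = 0"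
      using det_zero_dep[of "transpose A"] by auto
    have Aw: "A *v w = 0"
      using w(2) by (simp add: transpose_mult_sum[symmetric])
    have aw: "w \<bullet> a i = 0" for i
    proof -
      have "(A *v w) $ i = w \<bullet> a i"
        by (simp add: A_def matrix_vector_mult_def inner_vec_def mult.commute)
      then show ?thesis using Aw by simp
    qed
    define L2 where "L2 = L + (\<chi> r c. w $ c)"
    define b2 where "b2 = b - (\<chi> r. w \<bullet> x0)"
    have L2v: "L2 *v x = L *v x + (\<chi> r. w \<bullet> x)" for x
      by (simp add: L2_def matrix_vector_mult_def vec_eq_iff inner_vec_def algebra_simps sum.distrib)
    have "interpolates L2 b2 \<phi> x0 xs"
    proof -
      have "w \<bullet> xs i = w \<bullet> x0" for i using aw[of i] by (simp add: a_def inner_diff_right)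
      then show ?thesis using Lb unfolding interpolates_def L2v b2_def
        by (auto simp: algebra_simps)
    qed
    then have "(L2, b2) = (L, b)" using uniq Lb by (metis fst_conv snd_conv)
    then have "(\<chi> r c. w $ c) = (0::real^'n^'n)" by (simp add: L2_def)
    then have "w = 0" by (simp add: vec_eq_iff)
    with w show False by simp
  qed
  have d_nonneg: "0 \<le> d" unfolding d_def tuple_diam_def by (rule diameter_ge_0) (simp add: finite_imp_bounded)
  have "\<eta> ^ ?D * d ^ ?D \<le> \<bar>det A\<bar>"
    using vol vol_le_det[of x0 xs] unfolding A_def a_def by linarith
  then have volsq: "\<eta> ^ (2 * ?D) * d ^ (2 * ?D) \<le> det A ^ 2"
  proof -
    assume h: "\<eta> ^ ?D * d ^ ?D \<le> \<bar>det A\<bar>"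
    have "(\<eta> ^ ?D * d ^ ?D) ^ 2 \<le> \<bar>det A\<bar> ^ 2"
      by (rule power_mono[OF h]) (use e0 d_nonneg in simp)
    then show ?thesis by (simp add: power_mult_distrib power_mult[symmetric] mult.commute)
  qed
  have La: "L *v a i = \<Phi> (x0 + a i) - \<Phi> x0" for i
  proof -
    have h1: "L *v x0 + b = \<phi> x0" and h2: "L *v xs i + b = \<phi> (xs i)"
      using Lb unfolding interpolates_def by auto
    have "\<Phi> (x0 + a i) = \<phi> (xs i)" "\<Phi> x0 = \<phi> x0" using ext x0E xsE[of i] by (auto simp: a_def)
    then show ?thesis by (simp add: a_def matrix_vector_mult_diff_distrib flip: h1 h2)
  qed
  obtain t1 where t1: "0 < t1" "det ((\<chi> i. (\<Phi> (x0 + t1 *\<^sub>R a i) - \<Phi> x0) /\<^sub>R t1) :: real^'n^'n) = 0"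
    using exists_t1[where a=a and L=L and pp=x0, OF pd La detL] detA unfolding A_def by auto
  define B where "B = ((\<chi> i. (\<Phi> (x0 + t1 *\<^sub>R a i) - \<Phi> x0) /\<^sub>R t1) :: real^'n^'n)"
  obtain lam where lam: "lam \<noteq> 0" "(\<Sum>i\<in>UNIV. lam $ i *\<^sub>R B $ i) = 0"
    using det_zero_dep[of B] t1(2) unfolding B_def by auto
  have Bi: "B $ i = (\<Phi> (x0 + t1 *\<^sub>R a i) - \<Phi> x0) /\<^sub>R t1" for i by (simp add: B_def)
  have ai: "a i = ((x0 + t1 *\<^sub>R a i) - x0) /\<^sub>R t1" for i using t1(1) by simp
  have aij: "a i - a j = ((x0 + t1 *\<^sub>R a i) - (x0 + t1 *\<^sub>R a j)) /\<^sub>R t1" for i j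
    using t1(1) by (simp add: scaleR_diff_right[symmetric])
  have Bij: "B $ i - B $ j = (\<Phi> (x0 + t1 *\<^sub>R a i) - \<Phi> (x0 + t1 *\<^sub>R a j)) /\<^sub>R t1" for i j
    by (simp add: Bi scaleR_diff_right[symmetric])
  have bnd: "bounded (insert x0 (range xs))" by (simp add: finite_imp_bounded)
  have na: "norm (a i) \<le> d" for i
    using diameter_bounded_bound[OF bnd, of "xs i" x0] unfolding d_def tuple_diam_def a_def
    by (simp add: dist_norm)
  have nab: "norm (a i - a j) \<le> d" for i j
    using diameter_bounded_bound[OF bnd, of "xs i" "xs j"] unfolding d_def tuple_diam_def a_def
    by (simp add: dist_norm)
  have q: "det A ^ 2 \<le> 2 * real ?D ^ 2 * (fact ?D) ^ 2 * \<delta> * d ^ (2 * ?D)"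
    unfolding A_def
  proof (rule quant[OF d0 na nab _ _ _ _ lam(1), where b="\<lambda>i. B $ i"])
    show "(\<Sum>i\<in>UNIV. lam $ i *\<^sub>R B $ i) = 0" by (rule lam(2))
    fix i j
    show "norm (B $ i) ^ 2 \<le> (1 + \<delta>) * norm (a i) ^ 2"
      by (subst Bi, subst (2) ai) (rule scaled_bounds(1)[OF pd d0 t1(1)])
    show "norm (a i) ^ 2 \<le> (1 + \<delta>) * norm (B $ i) ^ 2"
      by (subst Bi, subst (1) ai) (rule scaled_bounds(2)[OF pd d0 t1(1)])
    show "norm (B $ i - B $ j) ^ 2 \<le> (1 + \<delta>) * norm (a i - a j) ^ 2"
      by (subst Bij, subst aij) (rule scaled_bounds(1)[OF pd d0 t1(1)])
    show "norm (a i - a j) ^ 2 \<le> (1 + \<delta>) * norm (B $ i - B $ j) ^ 2"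
      by (subst Bij, subst aij) (rule scaled_bounds(2)[OF pd d0 t1(1)])
  qed
  have pos: "det A ^ 2 > 0" using detA by simp
  have dpos: "d ^ (2 * ?D) > 0"
  proof (rule ccontr)
    assume "\<not> d ^ (2 * ?D) > 0"
    then have h: "d ^ (2 * ?D) = 0" using d_nonneg by (metis zero_le_power less_eq_real_def)
    have "det A ^ 2 \<le> 0" using q by (simp only: h mult_zero_right)
    then show False using pos by linarith
  qed
  have "\<eta> ^ (2 * ?D) * d ^ (2 * ?D) \<le> (2 * real ?D ^ 2 * (fact ?D) ^ 2 * \<delta>) * d ^ (2 * ?D)"
    using volsq q by simp
  then show ?thesis using dpos by simp
qed



theorem theorem1p11:
  fixes k :: nat
  assumes "CARD('n::finite) \<ge> 2" and "k \<ge> 1"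
  shows "\<exists>c C' C''. c > 0 \<and> C' > 0 \<and> C'' > 0 \<and>
    (\<forall>(\<epsilon>::real) (E :: (real^'n) set) (\<phi> :: real^'n \<Rightarrow> real^'n).
       0 < \<epsilon> \<and> \<epsilon> < c \<and> finite E \<and> card E \<le> k \<and>
       (\<forall>x\<in>E. \<forall>y\<in>E. inverse (1 + exp (- C'' / \<epsilon>)) * norm (x - y) \<le> norm (\<phi> x - \<phi> y) \<and>
                      norm (\<phi> x - \<phi> y) \<le> (1 + exp (- C'' / \<epsilon>)) * norm (x - y)) \<and>
       has_negative_block (exp (- C' / \<epsilon>)) E \<phi>
       \<longrightarrow> \<not> (\<exists>\<Phi>. proper_distorted_diffeo (exp (- C'' / \<epsilon>)) \<Phi> \<and> (\<forall>x\<in>E. \<Phi> x = \<phi> x)))"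
proof -
  let ?D = "CARD('n)"
  define N where "N = 2 * real ?D ^ 2 * (fact ?D) ^ 2"
  have N1: "N \<ge> 2"
  proof -
    have "real ?D ^ 2 \<ge> 1" using assms(1) by simp
    moreover have "(fact ?D :: real) ^ 2 \<ge> 1" by simp
    ultimately have "real ?D ^ 2 * (fact ?D :: real) ^ 2 \<ge> 1 * 1" by (intro mult_mono) auto
    then show ?thesis unfolding N_def by simp
  qed
  show ?thesis
  proof (rule exI[of _ "1 / N"], rule exI[of _ "1::real"], rule exI[of _ "real (2 * ?D + 1)"], intro conjI allI impI)
    show "0 < 1 / N" using N1 by simp
    show "(0::real) < 1" by simp
    show "0 < real (2 * ?D + 1)" by simp
    fix \<epsilon> :: real and E :: "(real^'n) set" and \<phi> :: "real^'n \<Rightarrow> real^'n"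
    assume H: "0 < \<epsilon> \<and> \<epsilon> < 1 / N \<and> finite E \<and> card E \<le> k \<and>
       (\<forall>x\<in>E. \<forall>y\<in>E. inverse (1 + exp (- real (2 * ?D + 1) / \<epsilon>)) * norm (x - y) \<le> norm (\<phi> x - \<phi> y) \<and>
                      norm (\<phi> x - \<phi> y) \<le> (1 + exp (- real (2 * ?D + 1) / \<epsilon>)) * norm (x - y)) \<and>
       has_negative_block (exp (- 1 / \<epsilon>)) E \<phi>"
    show "\<not> (\<exists>\<Phi>. proper_distorted_diffeo (exp (- real (2 * ?D + 1) / \<epsilon>)) \<Phi> \<and> (\<forall>x\<in>E. \<Phi> x = \<phi> x))"
    proof
      assume "\<exists>\<Phi>. proper_distorted_diffeo (exp (- real (2 * ?D + 1) / \<epsilon>)) \<Phi> \<and> (\<forall>x\<in>E. \<Phi> x = \<phi> x)"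
      then obtain \<Phi> where pd: "proper_distorted_diffeo (exp (- real (2 * ?D + 1) / \<epsilon>)) \<Phi>"
        and ext: "\<forall>x\<in>E. \<Phi> x = \<phi> x" by blast
      from H obtain x0 xs where nb: "negative_block (exp (- 1 / \<epsilon>)) E \<phi> x0 xs"
        unfolding has_negative_block_def by blast
      define \<eta> where "\<eta> = exp (- 1 / \<epsilon>)"
      have eta0: "\<eta> > 0" unfolding \<eta>_def by simp
      have del: "exp (- real (2 * ?D + 1) / \<epsilon>) = \<eta> ^ (2 * ?D + 1)"
      proof -
        have "- real (2 * ?D + 1) / \<epsilon> = real (2 * ?D + 1) * (- 1 / \<epsilon>)" by (simp only: times_divide_eq_right mult_minus1_right)
        then show ?thesis unfolding \<eta>_def by (simp only: exp_of_nat_mult)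
      qed
      have "\<eta> ^ (2 * ?D) \<le> N * exp (- real (2 * ?D + 1) / \<epsilon>)"
        using main_ineq[OF pd _ nb ext] unfolding N_def \<eta>_def by simp
      also have "\<dots> = N * \<eta> ^ (2 * ?D + 1)" by (simp only: del)
      also have "\<dots> = (N * \<eta>) * \<eta> ^ (2 * ?D)" by (simp add: power_add mult_ac)
      finally have "1 * \<eta> ^ (2 * ?D) \<le> (N * \<eta>) * \<eta> ^ (2 * ?D)" by simp
      then have Ne1: "1 \<le> N * \<eta>" using eta0 by (simp add: mult_le_cancel_right)
      have "N < 1 / \<epsilon>" using H N1 by (simp add: field_simps)
      then have "\<eta> < exp (- N)" unfolding \<eta>_def by simp
      then have "N * \<eta> < N * exp (- N)" using N1 by simp
      also have "N * exp (- N) < 1"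
      proof -
        have "1 + N \<le> exp N" by simp
        then have "(1 + N) * exp (- N) \<le> exp N * exp (- N)" by (simp add: mult_right_mono)
        also have "\<dots> = 1" by (simp flip: exp_add)
        finally have "exp (- N) + N * exp (- N) \<le> 1" by (simp add: algebra_simps)
        moreover have "exp (- N) > 0" by simp
        ultimately show ?thesis by linarith
      qed
      finally show False using Ne1 by simp
    qed
  qed
qed

end
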